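(* Let $\mathcal{A}=\{A_0,\ldots,A_d\}$ be an association scheme with splitting field $L$, and let $E\subseteq\mathbb{C}$ be a field containing $L$ that is closed under complex conjugation. If $\psi:E[\mathcal{A}]\to E[\mathcal{A}]$ is a non-zero $E$-linear map with $(MN)^\psi=M^\psi N^\psi$ and $(M\circ N)^\psi=M^\psi\circ N^\psi$ for all $M,N\in E[\mathcal{A}]$, then $(M^T)^\psi=(M^\psi)^T$ and $(M^* )^\psi=(M^\psi)^*$ for all $M\in E[\mathcal{A}]$.
   Context: An association scheme on $v$ vertices with $d$ classes is a set $\mathcal{A}=\{A_0,\ldots,A_d\}$ of $v\times v$ $(0,1)$-matrices such that $A_0=I$, $\sum_i A_i=J$ (the all-ones matrix), $A_i^T\in\mathcal{A}$ for all $i$, $A_iA_j=A_jA_i$ for all $i,j$, and each $A_iA_j$ lies in the span of $\mathcal{A}$. Its principal idempotents $E_0,\ldots,E_d$ are the pairwise orthogonal Hermitian idempotents with $\sum_jE_j=I$ forming a basis of the span of $\mathcal{A}$, with $A_iE_j=p_i(j)E_j$; the splitting field $L$ is $\mathbb{Q}$ adjoined all $p_i(j)$. $E[\mathcal{A}]$ is the $E$-span of $\mathcal{A}$; $\circ$ denotes the Schur (entrywise) product and $M^*$ the conjugate transpose. *)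

theory Defs
  imports "HOL-Analysis.Analysis"
begin

type_synonym 'n cmat = "complex^'n^'n"

definition mscale :: "complex \<Rightarrow> 'n::finite cmat \<Rightarrow> 'n cmat" where
  "mscale c M = (\<chi> i j. c * M $ i $ j)"

definition schur :: "'n::finite cmat \<Rightarrow> 'n cmat \<Rightarrow> 'n cmat" (infixl "\<circ>\<^sub>S" 70) where
  "schur M N = (\<chi> i j. M $ i $ j * N $ i $ j)"

definition cstar :: "'n::finite cmat \<Rightarrow> 'n cmat" where
  "cstar M = (\<chi> i j. cnj (M $ j $ i))"

definition allones :: "'n::finite cmat" where
  "allones = (\<chi> i j. 1)"

definition span_over :: "complex set \<Rightarrow> nat \<Rightarrow> (nat \<Rightarrow> 'n::finite cmat) \<Rightarrow> 'n cmat set" where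
  "span_over K d B = {M. \<exists>c. (\<forall>k\<le>d. c k \<in> K) \<and> M = (\<Sum>k\<le>d. mscale (c k) (B k))}"

definition assoc_scheme :: "nat \<Rightarrow> (nat \<Rightarrow> 'n::finite cmat) \<Rightarrow> bool" where
  "assoc_scheme d A \<longleftrightarrow>
     inj_on A {..d} \<and>
     (\<forall>i\<le>d. \<forall>x y. A i $ x $ y = 0 \<or> A i $ x $ y = 1) \<and>
     A 0 = mat 1 \<and>
     (\<Sum>i\<le>d. A i) = allones \<and>
     (\<forall>i\<le>d. \<exists>j\<le>d. transpose (A i) = A j) \<and>
     (\<forall>i\<le>d. \<forall>j\<le>d. A i ** A j = A j ** A i) \<and>
     (\<forall>i\<le>d. \<forall>j\<le>d. A i ** A j \<in> span_over UNIV d A)"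

definition principal_idempotents :: "nat \<Rightarrow> (nat \<Rightarrow> 'n::finite cmat) \<Rightarrow> (nat \<Rightarrow> 'n cmat) \<Rightarrow> bool" where
  "principal_idempotents d A Ep \<longleftrightarrow>
     (\<forall>j\<le>d. Ep j ** Ep j = Ep j \<and> cstar (Ep j) = Ep j) \<and>
     (\<forall>j\<le>d. \<forall>k\<le>d. j \<noteq> k \<longrightarrow> Ep j ** Ep k = 0) \<and>
     (\<Sum>j\<le>d. Ep j) = mat 1 \<and>
     (\<forall>j\<le>d. Ep j \<in> span_over UNIV d A) \<and>
     (\<forall>i\<le>d. A i \<in> span_over UNIV d Ep) \<and>
     (\<forall>c. (\<Sum>j\<le>d. mscale (c j) (Ep j)) = 0 \<longrightarrow> (\<forall>j\<le>d. c j = 0))"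

text \<open>The splitting field L = Q(p_i(j)) is contained in the field K: every eigenvalue
  p_i(j), defined by A_i E_j = p_i(j) E_j, lies in K.\<close>
definition contains_splitting_field :: "complex set \<Rightarrow> nat \<Rightarrow> (nat \<Rightarrow> 'n::finite cmat) \<Rightarrow> bool" where
  "contains_splitting_field K d A \<longleftrightarrow>
     \<rat> \<subseteq> K \<and>
     (\<forall>Ep. principal_idempotents d A Ep \<longrightarrow>
        (\<forall>i\<le>d. \<forall>j\<le>d. \<forall>p. A i ** Ep j = mscale p (Ep j) \<longrightarrow> p \<in> K))"

definition subfield_complex :: "complex set \<Rightarrow> bool" where
  "subfield_complex K \<longleftrightarrow> 0 \<in> K \<and> 1 \<in> K \<and>
     (\<forall>x\<in>K. \<forall>y\<in>K. x + y \<in> K \<and> x * y \<in> K) \<and>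
     (\<forall>x\<in>K. - x \<in> K \<and> inverse x \<in> K)"

end

theory Submission
  imports Defs
begin


locale sch =
  fixes d :: nat and A :: "nat \<Rightarrow> 'n::finite cmat"
  assumes scheme: "assoc_scheme d A"
begin

lemma A01: "k \<le> d \<Longrightarrow> A k $ x $ y = 0 \<or> A k $ x $ y = 1"
  using scheme unfolding assoc_scheme_def by blast

lemma exun: "\<exists>!k. k \<le> d \<and> A k $ x $ y = 1"
proof -
  let ?S = "{..d} \<inter> {k. A k $ x $ y = 1}"
  have "(\<Sum>i\<le>d. A i) $ x $ y = 1"
    using scheme unfolding assoc_scheme_def allones_def by simp
  hence "(\<Sum>i\<le>d. A i $ x $ y) = 1" by simp
  moreover have "(\<Sum>i\<le>d. A i $ x $ y) = (\<Sum>i\<le>d. if A i $ x $ y = 1 then 1 else 0)"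
    by (rule sum.cong) (use A01 in auto)
  moreover have "(\<Sum>i\<le>d. (if A i $ x $ y = 1 then 1 else 0::complex)) = of_nat (card ?S)"
    by (simp add: sum.If_cases)
  ultimately have "card ?S = 1"
    by (metis of_nat_eq_1_iff)
  then obtain k where k: "?S = {k}" using card_1_singletonE by blast
  show ?thesis
  proof (rule ex1I[of _ k])
    show "k \<le> d \<and> A k $ x $ y = 1" using k by blast
    show "\<And>j. j \<le> d \<and> A j $ x $ y = 1 \<Longrightarrow> j = k" using k by blast
  qed
qed

definition cls :: "'n \<Rightarrow> 'n \<Rightarrow> nat" where
  "cls x y = (THE k. k \<le> d \<and> A k $ x $ y = 1)"

lemma cls: "cls x y \<le> d" "A (cls x y) $ x $ y = 1"
  using theI'[OF exun[of x y]] unfolding cls_def by auto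

lemma A_eq: "k \<le> d \<Longrightarrow> A k $ x $ y = (if k = cls x y then 1 else 0)"
  using exun[of x y] cls[of x y] A01[of k x y] by auto

lemma sum_A: "(\<Sum>k\<le>d. g k * A k $ x $ y) = g (cls x y)"
proof -
  have "(\<Sum>k\<le>d. g k * A k $ x $ y) = (\<Sum>k\<le>d. if k = cls x y then g k else 0)"
    by (rule sum.cong) (auto simp: A_eq)
  thus ?thesis using cls(1)[of x y] by simp
qed

definition cm :: "(nat \<Rightarrow> complex) \<Rightarrow> 'n cmat" where
  "cm f = (\<chi> x y. f (cls x y))"

lemma cm_nth[simp]: "cm f $ x $ y = f (cls x y)"
  by (simp add: cm_def)

lemma cls_diag: "cls x x = 0"
proof -
  have "A 0 $ x $ x = 1" using scheme unfolding assoc_scheme_def by (simp add: mat_def)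
  thus ?thesis using exun[of x x] cls[of x x] by auto
qed

lemma A_cm: "k \<le> d \<Longrightarrow> A k = cm (\<lambda>j. if j = k then 1 else 0)"
  by (auto simp: vec_eq_iff A_eq)

lemma span_char:
  assumes "0 \<in> K"
  shows "M \<in> span_over K d A \<longleftrightarrow> (\<exists>f. M = cm f) \<and> (\<forall>x y. M $ x $ y \<in> K)"
proof
  assume "M \<in> span_over K d A"
  then obtain c where c: "\<forall>k\<le>d. c k \<in> K" "M = (\<Sum>k\<le>d. mscale (c k) (A k))"
    unfolding span_over_def by blast
  have e: "M $ x $ y = c (cls x y)" for x y
    using c(2) sum_A[of c x y] by (simp add: mscale_def)
  hence "M = cm c" by (simp add: vec_eq_iff)
  thus "(\<exists>f. M = cm f) \<and> (\<forall>x y. M $ x $ y \<in> K)" using e c(1) cls(1) by auto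
next
  assume "(\<exists>f. M = cm f) \<and> (\<forall>x y. M $ x $ y \<in> K)"
  then obtain f where f: "M = cm f" "\<forall>x y. M $ x $ y \<in> K" by blast
  define c where "c k = (if \<exists>x y. cls x y = k then f k else 0)" for k
  have cK: "\<forall>k\<le>d. c k \<in> K" using f assms unfolding c_def by auto
  have "M = (\<Sum>k\<le>d. mscale (c k) (A k))"
  proof -
    have "(\<Sum>k\<le>d. mscale (c k) (A k)) $ x $ y = M $ x $ y" for x y
      using sum_A[of c x y] f(1) by (auto simp: mscale_def c_def)
    thus ?thesis by (simp add: vec_eq_iff)
  qed
  thus "M \<in> span_over K d A" using cK unfolding span_over_def by blast
qed

lemma span_UNIV: "M \<in> span_over UNIV d A \<longleftrightarrow> (\<exists>f. M = cm f)"
  using span_char[of UNIV M] by simp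

lemma prod_cm: "\<exists>h. cm f ** cm g = cm h"
proof -
  have "\<forall>i\<le>d. \<forall>j\<le>d. \<exists>h. A i ** A j = cm h"
    using scheme span_UNIV unfolding assoc_scheme_def by blast
  then obtain H where H: "\<And>i j. i \<le> d \<Longrightarrow> j \<le> d \<Longrightarrow> A i ** A j = cm (H i j)"
    by metis
  have "(cm f ** cm g) $ x $ y = (\<Sum>i\<le>d. \<Sum>j\<le>d. f i * g j * H i j (cls x y))" for x y
  proof -
    have "(cm f ** cm g) $ x $ y = (\<Sum>z\<in>UNIV. f (cls x z) * g (cls z y))"
      by (simp add: matrix_matrix_mult_def)
    also have "\<dots> = (\<Sum>z\<in>UNIV. (\<Sum>i\<le>d. f i * A i $ x $ z) * (\<Sum>j\<le>d. g j * A j $ z $ y))"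
      by (simp add: sum_A)
    also have "\<dots> = (\<Sum>z\<in>UNIV. \<Sum>i\<le>d. \<Sum>j\<le>d. f i * g j * (A i $ x $ z * A j $ z $ y))"
      by (simp add: sum_product algebra_simps)
    also have "\<dots> = (\<Sum>i\<le>d. \<Sum>j\<le>d. f i * g j * (\<Sum>z\<in>UNIV. A i $ x $ z * A j $ z $ y))"
      by (simp add: sum.swap[of _ UNIV] sum_distrib_left)
    also have "\<dots> = (\<Sum>i\<le>d. \<Sum>j\<le>d. f i * g j * (A i ** A j) $ x $ y)"
      by (simp add: matrix_matrix_mult_def)
    also have "\<dots> = (\<Sum>i\<le>d. \<Sum>j\<le>d. f i * g j * H i j (cls x y))"
      by (intro sum.cong refl) (simp add: H)
    finally show ?thesis .
  qed
  hence "cm f ** cm g = cm (\<lambda>k. \<Sum>i\<le>d. \<Sum>j\<le>d. f i * g j * H i j k)"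
    by (simp add: vec_eq_iff)
  thus ?thesis by blast
qed

end

lemma pigeon:
  fixes Z :: "nat set" and S :: "nat \<Rightarrow> nat set"
  assumes fin: "finite Z" and sub: "\<And>k. k \<in> Z \<Longrightarrow> S k \<subseteq> Z"
    and ne: "\<And>k. k \<in> Z \<Longrightarrow> S k \<noteq> {}"
    and dis: "\<And>k l. k \<in> Z \<Longrightarrow> l \<in> Z \<Longrightarrow> k \<noteq> l \<Longrightarrow> S k \<inter> S l = {}"
  shows "(\<forall>k\<in>Z. card (S k) = 1) \<and> (\<Union>k\<in>Z. S k) = Z"
proof -
  have finS: "\<And>k. k \<in> Z \<Longrightarrow> finite (S k)" using sub fin finite_subset by blast
  have c1: "card (\<Union>k\<in>Z. S k) = (\<Sum>k\<in>Z. card (S k))"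
    by (rule card_UN_disjoint) (use fin finS dis in auto)
  have U: "(\<Union>k\<in>Z. S k) \<subseteq> Z" using sub by blast
  hence c2: "card (\<Union>k\<in>Z. S k) \<le> card Z" using fin card_mono by blast
  have ge: "\<And>k. k \<in> Z \<Longrightarrow> card (S k) \<ge> 1"
    using finS ne by (simp add: Suc_leI card_gt_0_iff)
  have "(\<Sum>k\<in>Z. card (S k) - 1) = (\<Sum>k\<in>Z. card (S k)) - (\<Sum>k\<in>Z. 1)"
    by (rule sum_subtractf_nat) (use ge in auto)
  also have "\<dots> = 0" using c1 c2 by simp
  finally have "\<forall>k\<in>Z. card (S k) - 1 = 0" using fin by simp
  hence a: "\<forall>k\<in>Z. card (S k) = 1" using ge by force
  hence "(\<Sum>k\<in>Z. card (S k)) = card Z" by simp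
  hence "card (\<Union>k\<in>Z. S k) = card Z" using c1 by simp
  hence "(\<Union>k\<in>Z. S k) = Z" using card_subset_eq[OF fin U] by simp
  with a show ?thesis by blast
qed

locale hom = sch d A for d and A :: "nat \<Rightarrow> 'n::finite cmat" +
  fixes K :: "complex set" and \<psi> :: "'n cmat \<Rightarrow> 'n cmat"
  assumes field: "subfield_complex K"
    and conj_closed: "\<forall>x\<in>K. cnj x \<in> K"
    and maps_into: "\<forall>M\<in>span_over K d A. \<psi> M \<in> span_over K d A"
    and additive: "\<forall>M\<in>span_over K d A. \<forall>N\<in>span_over K d A. \<psi> (M + N) = \<psi> M + \<psi> N"
    and homog: "\<forall>c\<in>K. \<forall>M\<in>span_over K d A. \<psi> (mscale c M) = mscale c (\<psi> M)"
    and nonzero: "\<exists>M\<in>span_over K d A. \<psi> M \<noteq> 0"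
    and mult: "\<forall>M\<in>span_over K d A. \<forall>N\<in>span_over K d A. \<psi> (M ** N) = \<psi> M ** \<psi> N"
    and schur_mult: "\<forall>M\<in>span_over K d A. \<forall>N\<in>span_over K d A. \<psi> (M \<circ>\<^sub>S N) = \<psi> M \<circ>\<^sub>S \<psi> N"
begin

abbreviation "SK \<equiv> span_over K d A"

lemma K0: "0 \<in> K" and K1: "1 \<in> K" and Kadd: "x \<in> K \<Longrightarrow> y \<in> K \<Longrightarrow> x + y \<in> K"
  and Kmul: "x \<in> K \<Longrightarrow> y \<in> K \<Longrightarrow> x * y \<in> K"
  using field unfolding subfield_complex_def by auto

lemma Ksum: "finite I \<Longrightarrow> (\<And>i. i \<in> I \<Longrightarrow> f i \<in> K) \<Longrightarrow> sum f I \<in> K"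
  by (induction I rule: finite_induct) (auto simp: K0 Kadd)

lemma SK_iff: "M \<in> SK \<longleftrightarrow> (\<exists>f. M = cm f) \<and> (\<forall>x y. M $ x $ y \<in> K)"
  using span_char[OF K0] .

lemma SK_add: "M \<in> SK \<Longrightarrow> N \<in> SK \<Longrightarrow> M + N \<in> SK"
proof -
  assume "M \<in> SK" "N \<in> SK"
  then obtain f g where "M = cm f" "N = cm g" "\<forall>x y. M $ x $ y \<in> K" "\<forall>x y. N $ x $ y \<in> K"
    unfolding SK_iff by blast
  thus ?thesis unfolding SK_iff
    by (auto simp: Kadd vec_eq_iff intro!: exI[of _ "\<lambda>k. f k + g k"])
qed

lemma SK_cm: "(\<And>k. f k \<in> K) \<Longrightarrow> cm f \<in> SK"
  unfolding SK_iff by auto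

lemma SK_scale: "c \<in> K \<Longrightarrow> M \<in> SK \<Longrightarrow> mscale c M \<in> SK"
proof -
  assume c: "c \<in> K" and "M \<in> SK"
  then obtain f where "M = cm f" "\<forall>x y. M $ x $ y \<in> K" unfolding SK_iff by blast
  thus ?thesis unfolding SK_iff using c
    by (auto simp: Kmul vec_eq_iff mscale_def intro!: exI[of _ "\<lambda>k. c * f k"])
qed

lemma SK_schur: "M \<in> SK \<Longrightarrow> N \<in> SK \<Longrightarrow> M \<circ>\<^sub>S N \<in> SK"
proof -
  assume "M \<in> SK" "N \<in> SK"
  then obtain f g where "M = cm f" "N = cm g" "\<forall>x y. M $ x $ y \<in> K" "\<forall>x y. N $ x $ y \<in> K"
    unfolding SK_iff by blast
  thus ?thesis unfolding SK_iff
    by (auto simp: Kmul vec_eq_iff schur_def intro!: exI[of _ "\<lambda>k. f k * g k"])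
qed

lemma SK_mul: "M \<in> SK \<Longrightarrow> N \<in> SK \<Longrightarrow> M ** N \<in> SK"
proof -
  assume "M \<in> SK" "N \<in> SK"
  then obtain f g where fg: "M = cm f" "N = cm g" "\<forall>x y. M $ x $ y \<in> K" "\<forall>x y. N $ x $ y \<in> K"
    unfolding SK_iff by blast
  have "\<forall>x y. (M ** N) $ x $ y \<in> K"
    unfolding matrix_matrix_mult_def using fg(3,4) by (auto intro!: Ksum Kmul)
  moreover have "\<exists>h. M ** N = cm h" using prod_cm fg(1,2) by blast
  ultimately show ?thesis unfolding SK_iff by blast
qed

lemma SK_A: "k \<le> d \<Longrightarrow> A k \<in> SK"
proof -
  assume k: "k \<le> d"
  have "cm (\<lambda>j. if j = k then 1 else 0) \<in> SK" by (rule SK_cm) (simp add: K0 K1)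
  thus ?thesis using A_cm[OF k] by simp
qed

lemma SK_0: "0 \<in> SK"
proof -
  have "(0::'n cmat) = cm (\<lambda>_. 0)" by (simp add: vec_eq_iff)
  thus ?thesis using SK_cm[of "\<lambda>_. 0"] K0 by simp
qed

lemma A0: "A 0 = mat 1"
  using scheme unfolding assoc_scheme_def by blast

lemma SK_I: "mat 1 \<in> SK"
  using SK_A[of 0] A0 by simp

lemma A_trans: "k \<le> d \<Longrightarrow> \<exists>j\<le>d. transpose (A k) = A j"
  using scheme unfolding assoc_scheme_def by blast

lemma psi0: "\<psi> 0 = 0"
proof -
  have "mscale 0 (0::'n cmat) = 0" by (simp add: mscale_def vec_eq_iff)
  moreover have "mscale 0 (\<psi> 0) = 0" by (simp add: mscale_def vec_eq_iff)
  moreover have "\<psi> (mscale 0 0) = mscale 0 (\<psi> 0)" using homog SK_0 K0 by blast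
  ultimately show ?thesis by simp
qed

lemma psi_sum: "finite I \<Longrightarrow> (\<And>i. i \<in> I \<Longrightarrow> M i \<in> SK) \<Longrightarrow>
   \<psi> (\<Sum>i\<in>I. M i) = (\<Sum>i\<in>I. \<psi> (M i)) \<and> (\<Sum>i\<in>I. M i) \<in> SK"
proof (induction I rule: finite_induct)
  case empty
  then show ?case using psi0 SK_0 by simp
next
  case (insert x F)
  then show ?case using additive SK_add by simp
qed

lemma schur_A: "k \<le> d \<Longrightarrow> cm f \<circ>\<^sub>S A k = mscale (f k) (A k)"
  by (auto simp: vec_eq_iff schur_def mscale_def A_eq)

lemma kill:
  assumes M: "M \<in> SK" and z: "\<psi> M = 0" and nz: "M $ x $ y \<noteq> 0"
  shows "\<psi> (A (cls x y)) = 0"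
proof -
  obtain f where f: "M = cm f" using M SK_iff by blast
  let ?k = "cls x y"
  have k: "?k \<le> d" by (rule cls)
  have fk: "f ?k \<noteq> 0" "f ?k \<in> K" using nz f M SK_iff by auto
  have "\<psi> (M \<circ>\<^sub>S A ?k) = \<psi> M \<circ>\<^sub>S \<psi> (A ?k)" using schur_mult M SK_A[OF k] by blast
  also have "\<dots> = 0" using z by (simp add: schur_def vec_eq_iff)
  finally have "\<psi> (mscale (f ?k) (A ?k)) = 0" using schur_A[OF k] f by simp
  hence "mscale (f ?k) (\<psi> (A ?k)) = 0" using homog fk(2) SK_A[OF k] by simp
  thus ?thesis using fk(1) by (simp add: mscale_def vec_eq_iff)
qed

lemma diag_nz:
  assumes k: "k \<le> d" and one: "A k $ x $ y = 1" and tr: "transpose (A k) = A j"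
  shows "(A k ** A j) $ x $ x \<noteq> 0"
proof -
  have e: "(A k ** A j) $ x $ x = (\<Sum>z\<in>UNIV. A k $ x $ z * A k $ x $ z)"
    using tr[symmetric] by (simp add: matrix_matrix_mult_def transpose_def)
  have nn: "0 \<le> Re (A k $ x $ z * A k $ x $ z)" for z using A01[OF k, of x z] by auto
  have "Re (A k $ x $ y * A k $ x $ y) \<le> (\<Sum>z\<in>UNIV. Re (A k $ x $ z * A k $ x $ z))"
    by (rule member_le_sum) (use nn in auto)
  hence "1 \<le> Re ((A k ** A j) $ x $ x)" using one e by (simp add: Re_sum)
  thus ?thesis by auto
qed

lemma inj0: assumes M: "M \<in> SK" and z: "\<psi> M = 0" shows "M = 0"
proof (rule ccontr)
  assume "M \<noteq> 0"
  then obtain x y where nz: "M $ x $ y \<noteq> 0" by (auto simp: vec_eq_iff)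
  let ?k = "cls x y"
  have k: "?k \<le> d" by (rule cls)
  have pk: "\<psi> (A ?k) = 0" by (rule kill[OF M z nz])
  obtain j where j: "j \<le> d" "transpose (A ?k) = A j" using A_trans[OF k] by blast
  have T: "A ?k ** A j \<in> SK" using SK_mul SK_A k j(1) by blast
  have "\<psi> (A ?k ** A j) = 0" using mult SK_A k j(1) pk by simp
  hence "\<psi> (A (cls x x)) = 0" using kill[OF T] diag_nz[OF k cls(2) j(2)] by blast
  hence pI: "\<psi> (mat 1) = 0" using cls_diag A0 by simp
  have "\<forall>N\<in>SK. \<psi> N = 0"
  proof
    fix N assume N: "N \<in> SK"
    have "\<psi> N = \<psi> (mat 1 ** N)" by simp
    also have "\<dots> = \<psi> (mat 1) ** \<psi> N" using mult SK_I N by blast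
    finally show "\<psi> N = 0" using pI by simp
  qed
  thus False using nonzero by blast
qed

definition Z :: "nat set" where "Z = {k. \<exists>x y. cls x y = k}"

lemma Z_le: "k \<in> Z \<Longrightarrow> k \<le> d" unfolding Z_def using cls(1) by auto

lemma Z_fin: "finite Z" using Z_le by (meson finite_atMost finite_subset atMost_iff subsetI)

lemma Z_notin: "k \<le> d \<Longrightarrow> k \<notin> Z \<Longrightarrow> A k = 0"
  unfolding Z_def by (auto simp: vec_eq_iff A_eq)

lemma P01: assumes k: "k \<le> d" shows "\<psi> (A k) $ x $ y = 0 \<or> \<psi> (A k) $ x $ y = 1"
proof -
  have "A k \<circ>\<^sub>S A k = A k" using A01[OF k] by (auto simp: vec_eq_iff schur_def)
  moreover have "\<psi> (A k \<circ>\<^sub>S A k) = \<psi> (A k) \<circ>\<^sub>S \<psi> (A k)" using schur_mult SK_A[OF k] by blast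
  ultimately have "(\<psi> (A k) \<circ>\<^sub>S \<psi> (A k)) $ x $ y = \<psi> (A k) $ x $ y" by simp
  hence "\<psi> (A k) $ x $ y * \<psi> (A k) $ x $ y = \<psi> (A k) $ x $ y"
    by (simp add: schur_def)
  hence "\<psi> (A k) $ x $ y * (\<psi> (A k) $ x $ y - 1) = 0" by (simp add: algebra_simps)
  thus ?thesis by simp
qed

lemma psi_SK: "k \<le> d \<Longrightarrow> \<psi> (A k) \<in> SK" using maps_into SK_A by blast

lemma psi_const: "k \<le> d \<Longrightarrow> cls x y = cls x' y' \<Longrightarrow> \<psi> (A k) $ x $ y = \<psi> (A k) $ x' $ y'"
proof -
  assume k: "k \<le> d" and c: "cls x y = cls x' y'"
  obtain g where "\<psi> (A k) = cm g" using psi_SK[OF k] SK_iff by blast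
  thus ?thesis using c by simp
qed

definition S :: "nat \<Rightarrow> nat set" where "S k = {cls x y | x y. \<psi> (A k) $ x $ y = 1}"

lemma S_sub: "S k \<subseteq> Z" unfolding S_def Z_def by auto

lemma S_ne: assumes k: "k \<in> Z" shows "S k \<noteq> {}"
proof -
  have kd: "k \<le> d" using Z_le k .
  obtain x y where "cls x y = k" using k Z_def by auto
  hence "A k $ x $ y \<noteq> 0" using cls(2)[of x y] by simp
  hence "A k \<noteq> 0" by auto
  hence "\<psi> (A k) \<noteq> 0" using inj0 SK_A[OF kd] by blast
  then obtain u v where "\<psi> (A k) $ u $ v \<noteq> 0" by (auto simp: vec_eq_iff)
  hence "\<psi> (A k) $ u $ v = 1" using P01[OF kd] by blast
  thus ?thesis unfolding S_def by blast
qed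

lemma S_dis: assumes k: "k \<in> Z" and l: "l \<in> Z" and kl: "k \<noteq> l" shows "S k \<inter> S l = {}"
proof (rule ccontr)
  have kd: "k \<le> d" and ld: "l \<le> d" using Z_le k l by auto
  assume "S k \<inter> S l \<noteq> {}"
  then obtain x y x' y' where c: "cls x y = cls x' y'" and p: "\<psi> (A k) $ x $ y = 1" "\<psi> (A l) $ x' $ y' = 1"
    unfolding S_def by auto
  have q: "\<psi> (A l) $ x $ y = 1" using p(2) psi_const[OF ld c] by simp
  have "A k \<circ>\<^sub>S A l = 0" using kl kd ld by (auto simp: vec_eq_iff schur_def A_eq)
  moreover have "\<psi> (A k \<circ>\<^sub>S A l) = \<psi> (A k) \<circ>\<^sub>S \<psi> (A l)" using schur_mult SK_A kd ld by blast
  ultimately have "\<psi> (A k) \<circ>\<^sub>S \<psi> (A l) = 0" using psi0 by simp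
  hence "(\<psi> (A k) \<circ>\<^sub>S \<psi> (A l)) $ x $ y = 0" by simp
  hence "\<psi> (A k) $ x $ y * \<psi> (A l) $ x $ y = 0" by (simp add: schur_def)
  thus False using p(1) q by simp
qed

lemma pig: "(\<forall>k\<in>Z. card (S k) = 1) \<and> (\<Union>k\<in>Z. S k) = Z"
  by (rule pigeon[OF Z_fin S_sub S_ne S_dis])

definition sig :: "nat \<Rightarrow> nat" where "sig k = the_elem (S k)"

lemma S_sig: "k \<in> Z \<Longrightarrow> S k = {sig k}"
proof -
  assume "k \<in> Z"
  hence "card (S k) = 1" using pig by blast
  then obtain a where "S k = {a}" by (rule card_1_singletonE)
  thus ?thesis unfolding sig_def by simp
qed

lemma sig_Z: "k \<in> Z \<Longrightarrow> sig k \<in> Z" using S_sig S_sub by blast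

lemma psi_A: assumes k: "k \<in> Z" shows "\<psi> (A k) = A (sig k)"
proof -
  have kd: "k \<le> d" using Z_le k .
  have sd: "sig k \<le> d" using Z_le sig_Z k by blast
  have "\<psi> (A k) $ x $ y = A (sig k) $ x $ y" for x y
  proof (cases "\<psi> (A k) $ x $ y = 1")
    case True
    hence "cls x y \<in> S k" unfolding S_def by blast
    thus ?thesis using True S_sig[OF k] A_eq[OF sd] by simp
  next
    case False
    hence z: "\<psi> (A k) $ x $ y = 0" using P01[OF kd] by blast
    have "cls x y \<noteq> sig k"
    proof
      assume "cls x y = sig k"
      hence "cls x y \<in> S k" using S_sig[OF k] by simp
      then obtain x' y' where "cls x y = cls x' y'" "\<psi> (A k) $ x' $ y' = 1" unfolding S_def by auto
      thus False using psi_const[OF kd, of x y x' y'] False by simp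
    qed
    thus ?thesis using z A_eq[OF sd] by simp
  qed
  thus ?thesis by (simp add: vec_eq_iff)
qed

lemma psi_I: "\<psi> (mat 1) = mat 1"
proof -
  obtain x :: 'n where True by blast
  have "0 \<in> Z" unfolding Z_def using cls_diag[of x] by blast
  then obtain j where j: "j \<in> Z" "0 \<in> S j" using pig by blast
  have sj: "sig j = 0" using j S_sig by simp
  have jd: "j \<le> d" using Z_le j(1) .
  have "\<psi> (A j) = \<psi> (A 0 ** A j)" using A0 by simp
  also have "\<dots> = \<psi> (A 0) ** \<psi> (A j)" using mult SK_A jd by simp
  finally have "mat 1 = \<psi> (mat 1) ** mat 1" using psi_A[OF j(1)] sj A0 by simp
  thus ?thesis by simp
qed

lemma tr_zero: "transpose (0::'n cmat) = 0" by (simp add: vec_eq_iff transpose_def)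

lemma psi_trans: assumes kd: "k \<le> d" shows "\<psi> (transpose (A k)) = transpose (\<psi> (A k))"
proof (cases "k \<in> Z")
  case False
  hence "A k = 0" using Z_notin kd by blast
  thus ?thesis using psi0 tr_zero by simp
next
  case k: True
  obtain x y where xy: "cls x y = k" using k Z_def by auto
  obtain j where j: "j \<le> d" "transpose (A k) = A j" using A_trans[OF kd] by blast
  have "A j $ y $ x = 1" using j(2)[symmetric] cls(2)[of x y] xy by (simp add: transpose_def)
  hence "cls y x = j" using A_eq[OF j(1)] by (simp split: if_splits)
  hence jZ: "j \<in> Z" unfolding Z_def by blast
  have sk: "sig k \<le> d" using sig_Z[OF k] Z_le by blast
  obtain m where m: "m \<le> d" "transpose (A (sig k)) = A m" using A_trans[OF sk] by blast
  let ?T = "A k ** A j"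
  have T: "?T \<in> SK" using SK_mul SK_A kd j(1) by blast
  have D: "mat 1 \<circ>\<^sub>S ?T \<in> SK" using SK_schur SK_I T by blast
  have "(mat 1 \<circ>\<^sub>S ?T) $ x $ x \<noteq> 0"
    using diag_nz[OF kd _ j(2), of x y] cls(2)[of x y] xy by (simp add: schur_def mat_def)
  hence "mat 1 \<circ>\<^sub>S ?T \<noteq> 0" by auto
  hence "\<psi> (mat 1 \<circ>\<^sub>S ?T) \<noteq> 0" using inj0 D by blast
  moreover have "\<psi> (mat 1 \<circ>\<^sub>S ?T) = mat 1 \<circ>\<^sub>S (A (sig k) ** A (sig j))"
  proof -
    have "\<psi> (mat 1 \<circ>\<^sub>S ?T) = \<psi> (mat 1) \<circ>\<^sub>S \<psi> ?T" using schur_mult SK_I T by blast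
    also have "\<psi> ?T = \<psi> (A k) ** \<psi> (A j)" using mult SK_A kd j(1) by blast
    finally show ?thesis using psi_I psi_A k jZ by simp
  qed
  ultimately obtain u v where "(mat 1 \<circ>\<^sub>S (A (sig k) ** A (sig j))) $ u $ v \<noteq> 0"
    by (metis vec_eq_iff zero_index)
  hence uv: "u = v" "(A (sig k) ** A (sig j)) $ u $ u \<noteq> 0"
    by (auto simp: schur_def mat_def split: if_splits)
  hence "(\<Sum>z\<in>UNIV. A (sig k) $ u $ z * A (sig j) $ z $ u) \<noteq> 0"
    by (simp add: matrix_matrix_mult_def)
  then obtain z where z: "A (sig k) $ u $ z * A (sig j) $ z $ u \<noteq> 0"
    using sum.not_neutral_contains_not_neutral by blast
  have sj: "sig j \<le> d" using sig_Z[OF jZ] Z_le by blast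
  have c1: "cls u z = sig k" using z A_eq[OF sk, of u z] by (auto split: if_splits)
  have c2: "cls z u = sig j" using z A_eq[OF sj, of z u] by (auto split: if_splits)
  have "A m $ z $ u = 1" using m(2)[symmetric] c1 cls(2)[of u z] by (simp add: transpose_def)
  hence "cls z u = m" using A_eq[OF m(1)] by (simp split: if_splits)
  hence "sig j = m" using c2 by simp
  thus ?thesis using j(2) psi_A[OF jZ] psi_A[OF k] m(2) by simp
qed

lemma psi_real: "k \<le> d \<Longrightarrow> cstar (\<psi> (A k)) = transpose (\<psi> (A k))"
proof -
  assume kd: "k \<le> d"
  have "cnj (\<psi> (A k) $ j $ i) = \<psi> (A k) $ j $ i" for i j using P01[OF kd, of j i] by auto
  thus ?thesis by (simp add: vec_eq_iff cstar_def transpose_def)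
qed

lemma A_real: "k \<le> d \<Longrightarrow> cstar (A k) = transpose (A k)"
proof -
  assume kd: "k \<le> d"
  have "cnj (A k $ j $ i) = A k $ j $ i" for i j using A01[OF kd, of j i] by auto
  thus ?thesis by (simp add: vec_eq_iff cstar_def transpose_def)
qed

lemma tr_sum: "transpose (\<Sum>i\<in>I. M i) = (\<Sum>i\<in>I. transpose (M i :: 'n cmat))"
  by (simp add: vec_eq_iff transpose_def)

lemma tr_scale: "transpose (mscale c (M::'n cmat)) = mscale c (transpose M)"
  by (simp add: vec_eq_iff transpose_def mscale_def)

lemma cs_sum: "cstar (\<Sum>i\<in>I. M i) = (\<Sum>i\<in>I. cstar (M i :: 'n cmat))"
  by (simp add: vec_eq_iff cstar_def cnj_sum)

lemma cs_scale: "cstar (mscale c (M::'n cmat)) = mscale (cnj c) (cstar M)"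
  by (simp add: vec_eq_iff cstar_def mscale_def)

lemma main: assumes M: "M \<in> SK"
  shows "\<psi> (transpose M) = transpose (\<psi> M) \<and> \<psi> (cstar M) = cstar (\<psi> M)"
proof -
  obtain c where c: "\<forall>k\<le>d. c k \<in> K" "M = (\<Sum>k\<le>d. mscale (c k) (A k))"
    using M unfolding span_over_def by blast
  have cc: "\<forall>k\<le>d. cnj (c k) \<in> K" using c(1) conj_closed by blast
  have trK: "k \<le> d \<Longrightarrow> transpose (A k) \<in> SK" for k using A_trans SK_A by metis
  have pM: "\<psi> M = (\<Sum>k\<le>d. mscale (c k) (\<psi> (A k)))"
  proof -
    have "\<psi> M = (\<Sum>k\<le>d. \<psi> (mscale (c k) (A k)))"
      using psi_sum[of "{..d}" "\<lambda>k. mscale (c k) (A k)"] c SK_scale SK_A by auto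
    also have "\<dots> = (\<Sum>k\<le>d. mscale (c k) (\<psi> (A k)))"
      by (rule sum.cong) (use homog c(1) SK_A in auto)
    finally show ?thesis .
  qed
  have tM: "transpose M = (\<Sum>k\<le>d. mscale (c k) (transpose (A k)))"
    using c(2) by (simp add: tr_sum tr_scale)
  have "\<psi> (transpose M) = (\<Sum>k\<le>d. \<psi> (mscale (c k) (transpose (A k))))"
    using psi_sum[of "{..d}" "\<lambda>k. mscale (c k) (transpose (A k))"] tM c(1) SK_scale trK by auto
  also have "\<dots> = (\<Sum>k\<le>d. mscale (c k) (transpose (\<psi> (A k))))"
    by (rule sum.cong) (use homog c(1) trK psi_trans in auto)
  also have "\<dots> = transpose (\<psi> M)" using pM by (simp add: tr_sum tr_scale)
  finally have 1: "\<psi> (transpose M) = transpose (\<psi> M)" .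
  have sM: "cstar M = (\<Sum>k\<le>d. mscale (cnj (c k)) (transpose (A k)))"
    using c(2) by (simp add: cs_sum cs_scale A_real)
  have "\<psi> (cstar M) = (\<Sum>k\<le>d. \<psi> (mscale (cnj (c k)) (transpose (A k))))"
    using psi_sum[of "{..d}" "\<lambda>k. mscale (cnj (c k)) (transpose (A k))"] sM cc SK_scale trK by auto
  also have "\<dots> = (\<Sum>k\<le>d. mscale (cnj (c k)) (cstar (\<psi> (A k))))"
    by (rule sum.cong) (use homog cc trK psi_trans psi_real in auto)
  also have "\<dots> = cstar (\<psi> M)" using pM by (simp add: cs_sum cs_scale)
  finally show ?thesis using 1 by simp
qed

end


theorem lemma3p2:
  fixes d :: nat and A :: "nat \<Rightarrow> 'n::finite cmat" and K :: "complex set"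
    and \<psi> :: "'n cmat \<Rightarrow> 'n cmat"
  assumes scheme: "assoc_scheme d A"
    and field: "subfield_complex K"
    and splitting: "contains_splitting_field K d A"
    and conj_closed: "\<forall>x\<in>K. cnj x \<in> K"
    and maps_into: "\<forall>M\<in>span_over K d A. \<psi> M \<in> span_over K d A"
    and additive: "\<forall>M\<in>span_over K d A. \<forall>N\<in>span_over K d A. \<psi> (M + N) = \<psi> M + \<psi> N"
    and homog: "\<forall>c\<in>K. \<forall>M\<in>span_over K d A. \<psi> (mscale c M) = mscale c (\<psi> M)"
    and nonzero: "\<exists>M\<in>span_over K d A. \<psi> M \<noteq> 0"
    and mult: "\<forall>M\<in>span_over K d A. \<forall>N\<in>span_over K d A. \<psi> (M ** N) = \<psi> M ** \<psi> N"
    and schur_mult: "\<forall>M\<in>span_over K d A. \<forall>N\<in>span_over K d A. \<psi> (M \<circ>\<^sub>S N) = \<psi> M \<circ>\<^sub>S \<psi> N"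
  shows "\<forall>M\<in>span_over K d A. \<psi> (transpose M) = transpose (\<psi> M) \<and> \<psi> (cstar M) = cstar (\<psi> M)"
proof -
  interpret h: hom d A K \<psi>
    using scheme field conj_closed maps_into additive homog nonzero mult schur_mult
    by (simp add: hom_def hom_axioms_def sch_def)
  show ?thesis using h.main by blast
qed

end
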